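(* Let $G\in\mathrm{PLO}$ be finitely generated. Then there is a series $G'=G_0\supseteq G_1\supseteq\cdots\supseteq G_n=1$ with $G_i\lhd G$ for all $i$, such that for each $i=1,\dots,n$: whenever $A,B$ are finitely generated subgroups of $G_{i-1}/G_i$, there exists $g\in G/G_i$ such that $A^g$ and $B$ centralize each other.
   Context: $\mathrm{PLO}$ is the class of groups isomorphic to a subgroup of $\mathcal{P}$, the group (under composition) of piecewise linear (differentiable except at finitely many points) orientation preserving self-homeomorphisms of $[0,1]$. $G'$ is the commutator subgroup and $A^g=gAg^{-1}$. *)

theory Defs
  imports Complex_Main "HOL-Algebra.Algebra"
begin

text \<open>Piecewise linear orientation-preserving self-homeomorphisms of [0,1].
  To get a genuine group under function composition in HOL, such a map is
  represented by the function on the reals that agrees with it on [0,1] and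
  is the identity outside [0,1].\<close>

definition piecewise_linear_on_unit :: "(real \<Rightarrow> real) \<Rightarrow> bool" where
  "piecewise_linear_on_unit f \<longleftrightarrow>
     (\<exists>xs :: real list. xs \<noteq> [] \<and> sorted_wrt (<) xs \<and> hd xs = 0 \<and> last xs = 1 \<and>
        (\<forall>i. Suc i < length xs \<longrightarrow>
           (\<exists>m c. \<forall>y \<in> {xs ! i .. xs ! Suc i}. f y = m * y + c)))"

definition PL_homeos :: "(real \<Rightarrow> real) set" where
  "PL_homeos = {f. continuous_on {0..1} f \<and> strict_mono_on {0..1} f \<and>
                   f ` {0..1} = {0..1} \<and> piecewise_linear_on_unit f \<and>
                   (\<forall>x. x \<notin> {0..1} \<longrightarrow> f x = x)}"

definition PLgroup :: "(real \<Rightarrow> real) monoid" where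
  "PLgroup = \<lparr>carrier = PL_homeos, monoid.mult = (\<circ>), one = id\<rparr>"

definition PLO :: "('a, 'b) monoid_scheme \<Rightarrow> bool" where
  "PLO G \<longleftrightarrow> (\<exists>H. subgroup H PLgroup \<and> G \<cong> (PLgroup\<lparr>carrier := H\<rparr>))"

definition fin_gen_group :: "('a, 'b) monoid_scheme \<Rightarrow> bool" where
  "fin_gen_group G \<longleftrightarrow> (\<exists>S. finite S \<and> S \<subseteq> carrier G \<and> generate G S = carrier G)"

definition fin_gen_subgroup :: "'a set \<Rightarrow> ('a, 'b) monoid_scheme \<Rightarrow> bool" where
  "fin_gen_subgroup A G \<longleftrightarrow> (\<exists>S. finite S \<and> S \<subseteq> carrier G \<and> A = generate G S)"

end

theory Submission
  imports Defs
begin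

lemma list_piece_right:
  fixes xs :: "real list"
  assumes "xs \<noteq> []" "sorted_wrt (<) xs" "hd xs = 0" "last xs = 1" "0 \<le> y" "y < 1"
  shows "\<exists>i. Suc i < length xs \<and> xs!i \<le> y \<and> y < xs!Suc i"
proof -
  define j where "j = (LEAST j. j < length xs \<and> y < xs!j)"
  have ex: "length xs - 1 < length xs \<and> y < xs!(length xs - 1)"
    using assms by (simp add: last_conv_nth)
  hence j: "j < length xs \<and> y < xs!j" unfolding j_def by (rule LeastI)
  have "xs!0 = 0" using assms by (simp add: hd_conv_nth)
  hence "j \<noteq> 0" using j assms by (metis less_le_not_le order.strict_trans1 le_less_linear)
  then obtain i where i: "j = Suc i" by (cases j) auto
  have "i < (LEAST j. j < length xs \<and> y < xs!j)" using i unfolding j_def by simp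
  hence "\<not> (i < length xs \<and> y < xs!i)" by (rule not_less_Least)
  thus ?thesis using i j by auto
qed
lemma list_piece_left:
  fixes xs :: "real list"
  assumes "xs \<noteq> []" "sorted_wrt (<) xs" "hd xs = 0" "last xs = 1" "0 < y" "y \<le> 1"
  shows "\<exists>i. Suc i < length xs \<and> xs!i < y \<and> y \<le> xs!Suc i"
proof -
  define j where "j = (LEAST j. j < length xs \<and> y \<le> xs!j)"
  have ex: "length xs - 1 < length xs \<and> y \<le> xs!(length xs - 1)"
    using assms by (simp add: last_conv_nth)
  hence j: "j < length xs \<and> y \<le> xs!j" unfolding j_def by (rule LeastI)
  have "xs!0 = 0" using assms by (simp add: hd_conv_nth)
  hence "j \<noteq> 0" using j assms by (metis less_le_not_le order.strict_trans1 le_less_linear)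
  then obtain i where i: "j = Suc i" by (cases j) auto
  have "i < (LEAST j. j < length xs \<and> y \<le> xs!j)" using i unfolding j_def by simp
  hence "\<not> (i < length xs \<and> y \<le> xs!i)" by (rule not_less_Least)
  thus ?thesis using i j by auto
qed

lemma pl_smono: "f \<in> PL_homeos \<Longrightarrow> strict_mono_on {0..1} f"
  unfolding PL_homeos_def by blast
lemma pl_less: "f \<in> PL_homeos \<Longrightarrow> x < y \<Longrightarrow> x \<in> {0..1} \<Longrightarrow> y \<in> {0..1} \<Longrightarrow> f x < f y"
  using pl_smono strict_mono_onD by blast
lemma pl_mono: "f \<in> PL_homeos \<Longrightarrow> x \<le> y \<Longrightarrow> x \<in> {0..1} \<Longrightarrow> y \<in> {0..1} \<Longrightarrow> f x \<le> f y"
  using pl_less[of f x y] by (cases "x = y") auto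
lemma pl_range: "f \<in> PL_homeos \<Longrightarrow> x \<in> {0..1} \<Longrightarrow> f x \<in> {0..1}"
  unfolding PL_homeos_def by blast
lemma pl_out: "f \<in> PL_homeos \<Longrightarrow> x \<notin> {0..1} \<Longrightarrow> f x = x"
  unfolding PL_homeos_def by blast
lemma pl_0: assumes "f \<in> PL_homeos" shows "f 0 = 0"
proof -
  have "(0::real) \<in> f ` {0..1}" using assms unfolding PL_homeos_def by auto
  then obtain z where z: "z \<in> {0..1}" "f z = 0" by auto
  have "f 0 \<le> f z" using pl_mono[OF assms, of 0 z] z by auto
  moreover have "f 0 \<ge> 0" using pl_range[OF assms, of 0] by auto
  ultimately show ?thesis using z by auto
qed
lemma pl_1: assumes "f \<in> PL_homeos" shows "f 1 = 1"
proof -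
  have "(1::real) \<in> f ` {0..1}" using assms unfolding PL_homeos_def by auto
  then obtain z where z: "z \<in> {0..1}" "f z = 1" by auto
  have "f z \<le> f 1" using pl_mono[OF assms, of z 1] z by auto
  moreover have "f 1 \<le> 1" using pl_range[OF assms, of 1] by auto
  ultimately show ?thesis using z by auto
qed
lemma pl_inj: assumes "f \<in> PL_homeos" shows "inj f"
proof (rule injI)
  fix x y assume e: "f x = f y"
  show "x = y"
  proof (rule ccontr)
    assume ne: "x \<noteq> y"
    have sm: "strict_mono_on {0..1} f" using assms unfolding PL_homeos_def by blast
    show False
    proof (cases "x \<in> {0..1}"; cases "y \<in> {0..1}")
      assume "x \<in> {0..1}" "y \<in> {0..1}" thus False using pl_less[OF assms, of x y] pl_less[OF assms, of y x] ne e
        by (cases "x < y") auto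
    next
      assume "x \<in> {0..1}" "y \<notin> {0..1}" thus False using pl_range[OF assms, of x] pl_out[OF assms, of y] e by auto
    next
      assume "x \<notin> {0..1}" "y \<in> {0..1}" thus False using pl_range[OF assms, of y] pl_out[OF assms, of x] e by auto
    next
      assume "x \<notin> {0..1}" "y \<notin> {0..1}" thus False using pl_out[OF assms] e ne by auto
    qed
  qed
qed

lemma list_bounds:
  fixes xs :: "real list"
  assumes "xs \<noteq> []" "sorted_wrt (<) xs" "hd xs = 0" "last xs = 1" "k < length xs"
  shows "0 \<le> xs!k \<and> xs!k \<le> 1"
proof -
  have "xs!0 \<le> xs!k" using assms sorted_wrt_nth_less[OF assms(2), of 0 k]
    by (cases k) auto
  moreover have "xs!k \<le> xs!(length xs - 1)"
  proof -
    have "k < length xs - 1 \<or> k = length xs - 1" using assms(5) by linarith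
    thus ?thesis using sorted_wrt_nth_less[OF assms(2), of k "length xs - 1"] assms(5) by fastforce
  qed
  ultimately show ?thesis using assms by (simp add: hd_conv_nth last_conv_nth)
qed

lemma pl_lin_right:
  assumes f: "f \<in> PL_homeos" and q: "0 \<le> q" "q < 1" "f q = q"
  shows "\<exists>e>0. \<exists>m>0. \<forall>y\<in>{q..q+e}. f y = q + m * (y - q)"
proof -
  obtain xs :: "real list" where xs: "xs \<noteq> []" "sorted_wrt (<) xs" "hd xs = 0" "last xs = 1"
    "\<forall>i. Suc i < length xs \<longrightarrow> (\<exists>m c. \<forall>y \<in> {xs ! i .. xs ! Suc i}. f y = m * y + c)"
    using f unfolding PL_homeos_def piecewise_linear_on_unit_def by blast
  obtain i where i: "Suc i < length xs" "xs!i \<le> q" "q < xs!Suc i"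
    using list_piece_right[OF xs(1-4) q(1,2)] by blast
  obtain m c where mc: "\<forall>y \<in> {xs ! i .. xs ! Suc i}. f y = m * y + c" using xs(5) i(1) by blast
  have b: "xs!Suc i \<le> 1" using list_bounds[OF xs(1-4) i(1)] by simp
  define e where "e = xs!Suc i - q"
  have e: "e > 0" using i unfolding e_def by simp
  have fq: "f q = m * q + c" using mc i by auto
  have lin: "\<forall>y\<in>{q..q+e}. f y = q + m * (y - q)"
    using mc i q fq unfolding e_def by (auto simp: algebra_simps)
  have "f q < f (xs!Suc i)" using pl_less[OF f, of q "xs!Suc i"] q b i by auto
  hence "f q < f (q+e)" unfolding e_def by simp
  hence "m > 0" using lin e by (auto simp: algebra_simps) (smt (verit) mult_le_0_iff)
  thus ?thesis using e lin by blast
qed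

lemma pl_lin_left:
  assumes f: "f \<in> PL_homeos" and q: "0 < q" "q \<le> 1" "f q = q"
  shows "\<exists>e>0. \<exists>m>0. \<forall>y\<in>{q-e..q}. f y = q + m * (y - q)"
proof -
  obtain xs :: "real list" where xs: "xs \<noteq> []" "sorted_wrt (<) xs" "hd xs = 0" "last xs = 1"
    "\<forall>i. Suc i < length xs \<longrightarrow> (\<exists>m c. \<forall>y \<in> {xs ! i .. xs ! Suc i}. f y = m * y + c)"
    using f unfolding PL_homeos_def piecewise_linear_on_unit_def by blast
  obtain i where i: "Suc i < length xs" "xs!i < q" "q \<le> xs!Suc i"
    using list_piece_left[OF xs(1-4) q(1,2)] by blast
  obtain m c where mc: "\<forall>y \<in> {xs ! i .. xs ! Suc i}. f y = m * y + c" using xs(5) i(1) by blast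
  have b: "xs!i \<ge> 0" using list_bounds[OF xs(1-4)] i(1) by simp
  define e where "e = q - xs!i"
  have e: "e > 0" using i unfolding e_def by simp
  have fq: "f q = m * q + c" using mc i by auto
  have lin: "\<forall>y\<in>{q-e..q}. f y = q + m * (y - q)"
    using mc i q fq unfolding e_def by (auto simp: algebra_simps)
  have "f (xs!i) < f q" using pl_less[OF f, of "xs!i" q] q b i by auto
  hence "f (q-e) < f q" unfolding e_def by simp
  hence "m > 0" using lin e by (auto simp: algebra_simps) (smt (verit) mult_le_0_iff)
  thus ?thesis using e lin by blast
qed

lemma subsingleton_finite: "(\<forall>a b. a \<in> S \<longrightarrow> b \<in> S \<longrightarrow> a = b) \<Longrightarrow> finite S"
proof (cases "S = {}")
  case False
  assume h: "\<forall>a b. a \<in> S \<longrightarrow> b \<in> S \<longrightarrow> a = b"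
  then obtain a where "a \<in> S" using False by blast
  hence "S \<subseteq> {a}" using h by blast
  thus ?thesis using finite_subset by blast
qed simp

lemma pl_fixdich:
  assumes f: "f \<in> PL_homeos"
  shows "\<exists>P. finite P \<and> (\<forall>u v. 0 \<le> u \<longrightarrow> u < v \<longrightarrow> v \<le> 1 \<longrightarrow> {u<..<v} \<inter> P = {} \<longrightarrow>
            (\<forall>z\<in>{u<..<v}. f z = z) \<or> (\<forall>z\<in>{u<..<v}. f z \<noteq> z))"
proof -
  obtain xs :: "real list" where xs: "xs \<noteq> []" "sorted_wrt (<) xs" "hd xs = 0" "last xs = 1"
    "\<forall>i. Suc i < length xs \<longrightarrow> (\<exists>m c. \<forall>y \<in> {xs ! i .. xs ! Suc i}. f y = m * y + c)"
    using f unfolding PL_homeos_def piecewise_linear_on_unit_def by blast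
  define F where "F i = {y\<in>{xs!i..xs!Suc i}. f y = y \<and> \<not>(\<forall>z\<in>{xs!i..xs!Suc i}. f z = z)}" for i
  define P where "P = set xs \<union> (\<Union>i\<in>{i. Suc i < length xs}. F i)"
  have finF: "finite (F i)" if iH: "Suc i < length xs" for i
  proof (rule subsingleton_finite, intro allI impI)
    fix a b assume ab: "a \<in> F i" "b \<in> F i"
    obtain m c where mc: "\<forall>y \<in> {xs ! i .. xs ! Suc i}. f y = m * y + c" using xs(5) iH by blast
    show "a = b"
    proof (rule ccontr)
      assume "a \<noteq> b"
      moreover have "m * a + c = a" "m * b + c = b" using ab mc unfolding F_def by auto
      ultimately have "(m - 1) * (a - b) = 0" by (simp add: algebra_simps)
      hence "m = 1" using \<open>a \<noteq> b\<close> by simp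
      hence "m = 1" "c = 0" using \<open>m * a + c = a\<close> by auto
      thus False using ab mc unfolding F_def by auto
    qed
  qed
  have "finite {i. Suc i < length xs}" by (rule finite_subset[of _ "{..<length xs}"]) auto
  hence finP: "finite P" unfolding P_def using finF by auto
  have "\<forall>u v. 0 \<le> u \<longrightarrow> u < v \<longrightarrow> v \<le> 1 \<longrightarrow> {u<..<v} \<inter> P = {} \<longrightarrow>
            (\<forall>z\<in>{u<..<v}. f z = z) \<or> (\<forall>z\<in>{u<..<v}. f z \<noteq> z)"
  proof (intro allI impI)
    fix u v :: real assume uv: "0 \<le> u" "u < v" "v \<le> 1" "{u<..<v} \<inter> P = {}"
    define w where "w = (u+v)/2"
    have w: "u < w" "w < v" "0 \<le> w" "w < 1" using uv unfolding w_def by auto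
    obtain i where i: "Suc i < length xs" "xs!i \<le> w" "w < xs!Suc i"
      using list_piece_right[OF xs(1-4) w(3,4)] by blast
    have xi: "xs!i \<in> P" "xs!Suc i \<in> P" unfolding P_def using i(1) by auto
    have sub: "{u<..<v} \<subseteq> {xs!i..xs!Suc i}"
    proof
      fix z assume z: "z \<in> {u<..<v}"
      have "\<not> (z < xs!i)"
      proof
        assume "z < xs!i" hence "xs!i \<in> {u<..<v}" using z w i by auto
        thus False using xi uv(4) by blast
      qed
      moreover have "\<not> (z > xs!Suc i)"
      proof
        assume "z > xs!Suc i" hence "xs!Suc i \<in> {u<..<v}" using z w i by auto
        thus False using xi uv(4) by blast
      qed
      ultimately show "z \<in> {xs!i..xs!Suc i}" by auto
    qed
    show "(\<forall>z\<in>{u<..<v}. f z = z) \<or> (\<forall>z\<in>{u<..<v}. f z \<noteq> z)"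
    proof (cases "\<forall>z\<in>{xs!i..xs!Suc i}. f z = z")
      case True thus ?thesis using sub by blast
    next
      case False
      have "\<forall>z\<in>{u<..<v}. f z \<noteq> z"
      proof (intro ballI notI)
        fix z assume z: "z \<in> {u<..<v}" "f z = z"
        hence "z \<in> F i" unfolding F_def using sub False by blast
        hence "z \<in> P" unfolding P_def using i(1) by blast
        thus False using z uv(4) by blast
      qed
      thus ?thesis by blast
    qed
  qed
  thus ?thesis using finP by blast
qed

definition linr :: "real \<Rightarrow> real \<Rightarrow> real \<Rightarrow> (real \<Rightarrow> real) \<Rightarrow> bool" where
  "linr q m e f \<longleftrightarrow> e > 0 \<and> m > 0 \<and> (\<forall>y\<in>{q..q+e}. f y = q + m * (y - q))"
definition linl :: "real \<Rightarrow> real \<Rightarrow> real \<Rightarrow> (real \<Rightarrow> real) \<Rightarrow> bool" where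
  "linl q m e f \<longleftrightarrow> e > 0 \<and> m > 0 \<and> (\<forall>y\<in>{q-e..q}. f y = q + m * (y - q))"

lemma linr_comp:
  assumes "linr q m1 e1 f1" "linr q m2 e2 f2"
  shows "linr q (m1*m2) (min e2 (e1/m2)) (f1 \<circ> f2)"
proof -
  have p: "e1 > 0" "m1 > 0" "e2 > 0" "m2 > 0" using assms unfolding linr_def by auto
  have "\<forall>y\<in>{q..q+min e2 (e1/m2)}. (f1 \<circ> f2) y = q + (m1*m2) * (y - q)"
  proof
    fix y assume y: "y \<in> {q..q+min e2 (e1/m2)}"
    have f2y: "f2 y = q + m2 * (y - q)" using assms(2) y unfolding linr_def by auto
    have "m2 * (y - q) \<le> m2 * (e1/m2)" using y p by (intro mult_left_mono) auto
    hence "m2 * (y - q) \<le> e1" using p by simp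
    moreover have "m2 * (y - q) \<ge> 0" using y p by auto
    ultimately have "f2 y \<in> {q..q+e1}" using f2y by auto
    hence "f1 (f2 y) = q + m1 * (f2 y - q)" using assms(1) unfolding linr_def by blast
    thus "(f1 \<circ> f2) y = q + (m1*m2) * (y - q)" using f2y by simp
  qed
  thus ?thesis using p unfolding linr_def by auto
qed

lemma linl_comp:
  assumes "linl q m1 e1 f1" "linl q m2 e2 f2"
  shows "linl q (m1*m2) (min e2 (e1/m2)) (f1 \<circ> f2)"
proof -
  have p: "e1 > 0" "m1 > 0" "e2 > 0" "m2 > 0" using assms unfolding linl_def by auto
  have "\<forall>y\<in>{q-min e2 (e1/m2)..q}. (f1 \<circ> f2) y = q + (m1*m2) * (y - q)"
  proof
    fix y assume y: "y \<in> {q-min e2 (e1/m2)..q}"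
    have f2y: "f2 y = q + m2 * (y - q)" using assms(2) y unfolding linl_def by auto
    have "m2 * (q - y) \<le> m2 * (e1/m2)" using y p by (intro mult_left_mono) auto
    hence "m2 * (q - y) \<le> e1" using p by simp
    moreover have "m2 * (q - y) \<ge> 0" using y p by auto
    ultimately have "f2 y \<in> {q-e1..q}" using f2y by (auto simp: algebra_simps)
    hence "f1 (f2 y) = q + m1 * (f2 y - q)" using assms(1) unfolding linl_def by blast
    thus "(f1 \<circ> f2) y = q + (m1*m2) * (y - q)" using f2y by simp
  qed
  thus ?thesis using p unfolding linl_def by auto
qed

lemma linr_inv:
  assumes "linr q m e f" "\<And>y. g (f y) = y"
  shows "linr q (1/m) (m*e) g"
proof -
  have p: "e > 0" "m > 0" using assms unfolding linr_def by auto
  have "\<forall>y\<in>{q..q+m*e}. g y = q + (1/m) * (y - q)"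
  proof
    fix y assume y: "y \<in> {q..q+m*e}"
    define z where "z = q + (y - q)/m"
    have "(y - q)/m \<le> e" using y p by (simp add: divide_le_eq mult.commute)
    moreover have "(y-q)/m \<ge> 0" using y p by auto
    ultimately have "z \<in> {q..q+e}" unfolding z_def by auto
    hence "f z = q + m * (z - q)" using assms(1) unfolding linr_def by blast
    hence "f z = y" using p unfolding z_def by simp
    hence "g y = z" using assms(2) by metis
    thus "g y = q + (1/m) * (y - q)" unfolding z_def by simp
  qed
  thus ?thesis using p unfolding linr_def by auto
qed

lemma linl_inv:
  assumes "linl q m e f" "\<And>y. g (f y) = y"
  shows "linl q (1/m) (m*e) g"
proof -
  have p: "e > 0" "m > 0" using assms unfolding linl_def by auto
  have "\<forall>y\<in>{q-m*e..q}. g y = q + (1/m) * (y - q)"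
  proof
    fix y assume y: "y \<in> {q-m*e..q}"
    define z where "z = q + (y - q)/m"
    have "(q - y)/m \<le> e" using y p by (simp add: divide_le_eq mult.commute)
    moreover have "(q-y)/m \<ge> 0" using y p by auto
    ultimately have "z \<in> {q-e..q}" unfolding z_def by (auto simp: diff_divide_distrib)
    hence "f z = q + m * (z - q)" using assms(1) unfolding linl_def by blast
    hence "f z = y" using p unfolding z_def by simp
    hence "g y = z" using assms(2) by metis
    thus "g y = q + (1/m) * (y - q)" unfolding z_def by simp
  qed
  thus ?thesis using p unfolding linl_def by auto
qed

lemma pl_below:
  assumes f: "f \<in> PL_homeos" and pp: "0 \<le> p" "p < p'" "p' \<le> 1" and id: "\<forall>z\<in>{p<..<p'}. f z = z"
  shows "f p \<le> p"
proof (rule ccontr)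
  assume "\<not> f p \<le> p"
  define z where "z = (p + min (f p) p') / 2"
  have z: "p < z" "z < p'" "z < f p" using \<open>\<not> f p \<le> p\<close> pp unfolding z_def by auto
  have "f p \<le> f z" using pl_mono[OF f, of p z] z pp by auto
  thus False using id z by auto
qed

lemma pl_above:
  assumes f: "f \<in> PL_homeos" and pp: "0 \<le> p" "p < p'" "p' \<le> 1" and id: "\<forall>z\<in>{p<..<p'}. f z = z"
  shows "f p' \<ge> p'"
proof (rule ccontr)
  assume "\<not> f p' \<ge> p'"
  define z where "z = (p' + max (f p') p) / 2"
  have z: "p < z" "z < p'" "z > f p'" using \<open>\<not> f p' \<ge> p'\<close> pp unfolding z_def by auto
  have "f z \<le> f p'" using pl_mono[OF f, of z p'] z pp by auto
  thus False using id z by auto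
qed

locale plrep = group G for G (structure) +
  fixes \<phi> :: "'a \<Rightarrow> real \<Rightarrow> real"
  assumes phom: "\<And>x y. x \<in> carrier G \<Longrightarrow> y \<in> carrier G \<Longrightarrow> \<phi> (x \<otimes> y) = \<phi> x \<circ> \<phi> y"
  and ppl: "\<And>x. x \<in> carrier G \<Longrightarrow> \<phi> x \<in> PL_homeos"
  and pinj: "inj_on \<phi> (carrier G)"
begin

definition Fix :: "real set" where "Fix = {x. \<forall>g\<in>carrier G. \<phi> g x = x}"

lemma phi_one: "\<phi> \<one> = id"
proof
  fix y
  have "\<phi> \<one> = \<phi> \<one> \<circ> \<phi> \<one>" using phom[of \<one> \<one>] by simp
  hence "\<phi> \<one> (\<phi> \<one> y) = \<phi> \<one> y" by (metis comp_apply)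
  thus "\<phi> \<one> y = id y" using pl_inj[OF ppl[of \<one>]] by (simp add: inj_eq)
qed

lemma phi_inv1: "g \<in> carrier G \<Longrightarrow> \<phi> (inv g) (\<phi> g y) = y"
  using phom[of "inv g" g] phi_one by (metis comp_apply id_apply inv_closed l_inv)
lemma phi_inv2: "g \<in> carrier G \<Longrightarrow> \<phi> g (\<phi> (inv g) y) = y"
  using phom[of g "inv g"] phi_one by (metis comp_apply id_apply inv_closed r_inv)
lemma phi_mult: "x \<in> carrier G \<Longrightarrow> y \<in> carrier G \<Longrightarrow> \<phi> (x \<otimes> y) z = \<phi> x (\<phi> y z)"
  using phom by simp

lemma fix01: "0 \<in> Fix" "1 \<in> Fix"
  unfolding Fix_def using pl_0 pl_1 ppl by auto

lemma pres_below: "g \<in> carrier G \<Longrightarrow> q \<in> Fix \<Longrightarrow> q \<le> 1 \<Longrightarrow> 0 \<le> y \<Longrightarrow> y \<le> q \<Longrightarrow> 0 \<le> \<phi> g y \<and> \<phi> g y \<le> q"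
  using pl_mono[OF ppl[of g], of y q] pl_range[OF ppl[of g], of y] unfolding Fix_def by auto
lemma pres_above: "g \<in> carrier G \<Longrightarrow> q \<in> Fix \<Longrightarrow> 0 \<le> q \<Longrightarrow> q \<le> y \<Longrightarrow> y \<le> 1 \<Longrightarrow> q \<le> \<phi> g y \<and> \<phi> g y \<le> 1"
  using pl_mono[OF ppl[of g], of q y] pl_range[OF ppl[of g], of y] unfolding Fix_def by auto

lemma fixer_subgroup: "subgroup {g \<in> carrier G. \<forall>x\<in>XS. \<phi> g x = x} G"
proof (rule subgroupI)
  show "{g \<in> carrier G. \<forall>x\<in>XS. \<phi> g x = x} \<noteq> {}" using phi_one by auto
next
  fix a assume a: "a \<in> {g \<in> carrier G. \<forall>x\<in>XS. \<phi> g x = x}"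
  hence a1: "a \<in> carrier G" "\<forall>x\<in>XS. \<phi> a x = x" by auto
  have "\<forall>x\<in>XS. \<phi> (inv a) x = x"
  proof
    fix x assume "x \<in> XS"
    hence "\<phi> (inv a) x = \<phi> (inv a) (\<phi> a x)" using a1 by simp
    thus "\<phi> (inv a) x = x" using phi_inv1[OF a1(1)] by simp
  qed
  thus "inv a \<in> {g \<in> carrier G. \<forall>x\<in>XS. \<phi> g x = x}" using a1 by simp
next
  fix a b assume "a \<in> {g \<in> carrier G. \<forall>x\<in>XS. \<phi> g x = x}" "b \<in> {g \<in> carrier G. \<forall>x\<in>XS. \<phi> g x = x}"
  thus "a \<otimes> b \<in> {g \<in> carrier G. \<forall>x\<in>XS. \<phi> g x = x}" using phi_mult by auto
qed auto

lemma comm_formula: "h \<in> carrier G \<Longrightarrow> k \<in> carrier G \<Longrightarrow>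
  \<phi> (h \<otimes> k \<otimes> inv h \<otimes> inv k) = \<phi> h \<circ> \<phi> k \<circ> \<phi> (inv h) \<circ> \<phi> (inv k)"
  by (simp add: phom)

lemma derived_right:
  assumes q: "q \<in> Fix" "0 \<le> q" "q < 1" and g: "g \<in> derived G (carrier G)"
  shows "\<exists>e>0. \<forall>y\<in>{q..q+e}. \<phi> g y = y"
proof -
  define Z where "Z = {g \<in> carrier G. \<exists>e>0. \<forall>y\<in>{q..q+e}. \<phi> g y = y}"
  have sZ: "subgroup Z G"
  proof (rule subgroupI)
    have "\<one> \<in> Z" unfolding Z_def using phi_one by (simp add: exI[of _ "1::real"])
    thus "Z \<noteq> {}" by blast
  next
    fix a assume a: "a \<in> Z"
    then obtain e where e: "e > 0" "\<forall>y\<in>{q..q+e}. \<phi> a y = y" unfolding Z_def by blast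
    have "\<forall>y\<in>{q..q+e}. \<phi> (inv a) y = y" using e phi_inv1[of a] a unfolding Z_def by (metis (no_types, lifting) mem_Collect_eq)
    thus "inv a \<in> Z" using a e unfolding Z_def by auto
  next
    fix a b assume ab: "a \<in> Z" "b \<in> Z"
    then obtain e1 e2 where e: "e1 > 0" "\<forall>y\<in>{q..q+e1}. \<phi> a y = y" "e2 > 0" "\<forall>y\<in>{q..q+e2}. \<phi> b y = y"
      unfolding Z_def by blast
    have "\<forall>y\<in>{q..q+min e1 e2}. \<phi> (a \<otimes> b) y = y" using e ab phi_mult unfolding Z_def by auto
    thus "a \<otimes> b \<in> Z" using ab e unfolding Z_def by (auto intro!: exI[of _ "min e1 e2"])
  qed (auto simp: Z_def)
  have lin: "\<exists>m e. linr q m e (\<phi> h)" if h: "h \<in> carrier G" for h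
    using pl_lin_right[OF ppl[OF h] q(2,3)] q(1) h unfolding Fix_def linr_def by blast
  have "derived_set G (carrier G) \<subseteq> Z"
  proof (safe)
    fix h k assume hk: "h \<in> carrier G" "k \<in> carrier G"
    obtain m1 e1 where 1: "linr q m1 e1 (\<phi> h)" using lin hk by blast
    obtain m2 e2 where 2: "linr q m2 e2 (\<phi> k)" using lin hk by blast
    have 3: "linr q (1/m1) (m1*e1) (\<phi> (inv h))" using linr_inv[OF 1] phi_inv1 hk by blast
    have 4: "linr q (1/m2) (m2*e2) (\<phi> (inv k))" using linr_inv[OF 2] phi_inv1 hk by blast
    obtain m e where c: "linr q m e (\<phi> h \<circ> \<phi> k \<circ> \<phi> (inv h) \<circ> \<phi> (inv k))"
      and mm: "m = m1 * m2 * (1/m1) * (1/m2)"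
      using linr_comp[OF linr_comp[OF linr_comp[OF 1 2] 3] 4] by blast
    have "m = 1" using mm 1 2 unfolding linr_def by simp
    hence "\<forall>y\<in>{q..q+e}. \<phi> (h \<otimes> k \<otimes> inv h \<otimes> inv k) y = y" using c comm_formula[OF hk] unfolding linr_def by simp
    thus "h \<otimes> k \<otimes> inv h \<otimes> inv k \<in> Z" using c hk unfolding Z_def linr_def by auto
  qed
  hence "derived G (carrier G) \<subseteq> Z" unfolding derived_def using generate_subgroup_incl[OF _ sZ] by blast
  thus ?thesis using g unfolding Z_def by blast
qed

lemma derived_left:
  assumes q: "q \<in> Fix" "0 < q" "q \<le> 1" and g: "g \<in> derived G (carrier G)"
  shows "\<exists>e>0. \<forall>y\<in>{q-e..q}. \<phi> g y = y"
proof -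
  define Z where "Z = {g \<in> carrier G. \<exists>e>0. \<forall>y\<in>{q-e..q}. \<phi> g y = y}"
  have sZ: "subgroup Z G"
  proof (rule subgroupI)
    have "\<one> \<in> Z" unfolding Z_def using phi_one by (simp add: exI[of _ "1::real"])
    thus "Z \<noteq> {}" by blast
  next
    fix a assume a: "a \<in> Z"
    then obtain e where e: "e > 0" "\<forall>y\<in>{q-e..q}. \<phi> a y = y" unfolding Z_def by blast
    have "\<forall>y\<in>{q-e..q}. \<phi> (inv a) y = y" using e phi_inv1[of a] a unfolding Z_def by (metis (no_types, lifting) mem_Collect_eq)
    thus "inv a \<in> Z" using a e unfolding Z_def by auto
  next
    fix a b assume ab: "a \<in> Z" "b \<in> Z"
    then obtain e1 e2 where e: "e1 > 0" "\<forall>y\<in>{q-e1..q}. \<phi> a y = y" "e2 > 0" "\<forall>y\<in>{q-e2..q}. \<phi> b y = y"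
      unfolding Z_def by blast
    have "\<forall>y\<in>{q-min e1 e2..q}. \<phi> (a \<otimes> b) y = y" using e ab phi_mult unfolding Z_def by auto
    thus "a \<otimes> b \<in> Z" using ab e unfolding Z_def by (auto intro!: exI[of _ "min e1 e2"])
  qed (auto simp: Z_def)
  have lin: "\<exists>m e. linl q m e (\<phi> h)" if h: "h \<in> carrier G" for h
    using pl_lin_left[OF ppl[OF h] q(2,3)] q(1) h unfolding Fix_def linl_def by blast
  have "derived_set G (carrier G) \<subseteq> Z"
  proof (safe)
    fix h k assume hk: "h \<in> carrier G" "k \<in> carrier G"
    obtain m1 e1 where 1: "linl q m1 e1 (\<phi> h)" using lin hk by blast
    obtain m2 e2 where 2: "linl q m2 e2 (\<phi> k)" using lin hk by blast
    have 3: "linl q (1/m1) (m1*e1) (\<phi> (inv h))" using linl_inv[OF 1] phi_inv1 hk by blast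
    have 4: "linl q (1/m2) (m2*e2) (\<phi> (inv k))" using linl_inv[OF 2] phi_inv1 hk by blast
    obtain m e where c: "linl q m e (\<phi> h \<circ> \<phi> k \<circ> \<phi> (inv h) \<circ> \<phi> (inv k))"
      and mm: "m = m1 * m2 * (1/m1) * (1/m2)"
      using linl_comp[OF linl_comp[OF linl_comp[OF 1 2] 3] 4] by blast
    have "m = 1" using mm 1 2 unfolding linl_def by simp
    hence "\<forall>y\<in>{q-e..q}. \<phi> (h \<otimes> k \<otimes> inv h \<otimes> inv k) y = y" using c comm_formula[OF hk] unfolding linl_def by simp
    thus "h \<otimes> k \<otimes> inv h \<otimes> inv k \<in> Z" using c hk unfolding Z_def linl_def by auto
  qed
  hence "derived G (carrier G) \<subseteq> Z" unfolding derived_def using generate_subgroup_incl[OF _ sZ] by blast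
  thus ?thesis using g unfolding Z_def by blast
qed

lemma orbit_push:
  assumes ab: "a < b" "0 \<le> a" "b \<le> 1" and orb: "\<forall>y\<in>{a<..<b}. y \<notin> Fix"
    and c: "a < c" "c < b" and d: "d < b"
  shows "\<exists>h\<in>carrier G. d \<le> \<phi> h c"
proof (rule ccontr)
  assume "\<not> ?thesis"
  hence lt: "\<forall>h\<in>carrier G. \<phi> h c < d" by auto
  define Orb where "Orb = (\<lambda>g. \<phi> g c) ` carrier G"
  have c01: "c \<in> {0..1}" using ab c by auto
  have Orng: "\<forall>x\<in>Orb. 0 \<le> x \<and> x \<le> 1" unfolding Orb_def using pl_range[OF ppl] c01 by fastforce
  have bdd: "bdd_above Orb" using Orng by (auto intro: bdd_aboveI[of _ 1])
  have ne: "Orb \<noteq> {}" unfolding Orb_def by auto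
  define s where "s = Sup Orb"
  have cO: "c \<in> Orb" unfolding Orb_def using phi_one by (auto intro: image_eqI[of _ _ \<one>])
  have sc: "c \<le> s" unfolding s_def using cO bdd by (simp add: cSup_upper)
  have sd: "s \<le> d" unfolding s_def using lt ne by (intro cSup_least) (auto simp: Orb_def)
  have s1: "s \<le> 1" unfolding s_def using Orng ne by (intro cSup_least) auto
  have key: "s \<le> \<phi> k s" if k: "k \<in> carrier G" for k
  proof (unfold s_def, rule cSup_least[OF ne])
    fix x assume "x \<in> Orb"
    then obtain g where g: "g \<in> carrier G" "x = \<phi> g c" unfolding Orb_def by auto
    have "\<phi> (inv k \<otimes> g) c \<in> Orb" unfolding Orb_def using g k by auto
    hence le: "\<phi> (inv k \<otimes> g) c \<le> Sup Orb" using bdd by (simp add: cSup_upper)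
    have "\<phi> k (\<phi> (inv k \<otimes> g) c) \<le> \<phi> k (Sup Orb)"
      using pl_mono[OF ppl[OF k] le] Orng \<open>\<phi> (inv k \<otimes> g) c \<in> Orb\<close> s1 sc c01 unfolding s_def by auto
    moreover have "\<phi> k (\<phi> (inv k \<otimes> g) c) = x" using g k phi_mult phi_inv2 by simp
    ultimately show "x \<le> \<phi> k (Sup Orb)" by simp
  qed
  have "s \<in> Fix" unfolding Fix_def
  proof (safe)
    fix k assume k: "k \<in> carrier G"
    have "s \<le> \<phi> (inv k) s" using key k by simp
    hence "\<phi> k s \<le> \<phi> k (\<phi> (inv k) s)" using pl_mono[OF ppl[OF k]] s1 sc c01
      pl_range[OF ppl[of "inv k"], of s] k by auto
    thus "\<phi> k s = s" using key[OF k] phi_inv2[OF k] by simp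
  qed
  moreover have "s \<in> {a<..<b}" using sc sd c d by auto
  ultimately show False using orb by blast
qed

end

lemma finite_chain:
  fixes Q :: "real set"
  assumes "finite Q" "0 \<in> Q" "1 \<in> Q" "\<forall>p\<in>Q. 0 \<le> p \<and> p \<le> 1"
  shows "\<exists>n q. q 0 = 0 \<and> q n = 1 \<and> (\<forall>i\<le>n. q i \<in> Q) \<and> (\<forall>i j. i < j \<longrightarrow> j \<le> n \<longrightarrow> q i < q j)
     \<and> (\<forall>i<n. \<forall>p\<in>Q. \<not>(q i < p \<and> p < q (Suc i)))"
proof -
  obtain qs where qs: "sorted_wrt (<) qs" "set qs = Q"
    using finite_set_strict_sorted[OF assms(1)] by blast
  define n where "n = length qs - 1"
  have len: "length qs > 0" using qs assms by auto
  have nl: "n < length qs" unfolding n_def using len by auto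
  have lt: "qs!i < qs!j" if "i < j" "j \<le> n" for i j using sorted_wrt_nth_less[OF qs(1) that(1)] that nl by auto
  have le: "qs!i \<le> qs!j" if "i \<le> j" "j \<le> n" for i j using lt[of i j] that by (cases "i = j") auto
  obtain j0 where j0: "j0 < length qs" "qs!j0 = 0" using qs assms by (metis in_set_conv_nth)
  obtain j1 where j1: "j1 < length qs" "qs!j1 = 1" using qs assms by (metis in_set_conv_nth)
  have inQ: "qs!i \<in> Q" if "i \<le> n" for i using that nl qs by auto
  have "j0 = 0"
  proof (rule ccontr)
    assume "j0 \<noteq> 0" hence "qs!0 < qs!j0" using lt[of 0 j0] j0 nl by (simp add: n_def)
    thus False using j0 inQ[of 0] assms(4) by force
  qed
  moreover have "j1 = n"
  proof (rule ccontr)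
    assume "j1 \<noteq> n" hence "qs!j1 < qs!n" using lt[of j1 n] j1 nl by (simp add: n_def)
    thus False using j1 inQ[of n] assms(4) by force
  qed
  moreover have "\<forall>i<n. \<forall>p\<in>Q. \<not>(qs!i < p \<and> p < qs!(Suc i))"
  proof (intro allI impI ballI notI)
    fix i p assume i: "i < n" and p: "p \<in> Q" and b: "qs!i < p \<and> p < qs!(Suc i)"
    obtain j where j: "j < length qs" "qs!j = p" using qs p by (metis in_set_conv_nth)
    have "j \<le> n" using j n_def by auto
    show False
    proof (cases "j \<le> i")
      case True thus False using le[of j i] i b j by auto
    next
      case False hence "Suc i \<le> j" by auto
      thus False using le[of "Suc i" j] \<open>j \<le> n\<close> b j by auto
    qed
  qed
  ultimately show ?thesis using j0 j1 inQ lt by (intro exI[of _ n] exI[of _ "\<lambda>i. qs!i"]) auto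
qed

locale plrep_fg = plrep +
  fixes S assumes finS: "finite S" and SG: "S \<subseteq> carrier G" and genS: "generate G S = carrier G"
begin

lemma gen_fix: "\<forall>s\<in>S. \<forall>x\<in>XS. \<phi> s x = x \<Longrightarrow> g \<in> carrier G \<Longrightarrow> \<forall>x\<in>XS. \<phi> g x = x"
  using generate_subgroup_incl[OF _ fixer_subgroup[of XS], of S] SG genS by blast

lemma exP: "\<exists>P. finite P \<and> (\<forall>s\<in>S. \<forall>u v. 0 \<le> u \<longrightarrow> u < v \<longrightarrow> v \<le> 1 \<longrightarrow> {u<..<v} \<inter> P = {} \<longrightarrow>
            (\<forall>z\<in>{u<..<v}. \<phi> s z = z) \<or> (\<forall>z\<in>{u<..<v}. \<phi> s z \<noteq> z))"
proof -
  have "\<forall>s\<in>S. \<exists>P. finite P \<and> (\<forall>u v. 0 \<le> u \<longrightarrow> u < v \<longrightarrow> v \<le> 1 \<longrightarrow> {u<..<v} \<inter> P = {} \<longrightarrow>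
            (\<forall>z\<in>{u<..<v}. \<phi> s z = z) \<or> (\<forall>z\<in>{u<..<v}. \<phi> s z \<noteq> z))"
    using pl_fixdich ppl SG by blast
  then obtain Pf where Pf: "\<forall>s\<in>S. finite (Pf s) \<and> (\<forall>u v. 0 \<le> u \<longrightarrow> u < v \<longrightarrow> v \<le> 1 \<longrightarrow> {u<..<v} \<inter> Pf s = {} \<longrightarrow>
            (\<forall>z\<in>{u<..<v}. \<phi> s z = z) \<or> (\<forall>z\<in>{u<..<v}. \<phi> s z \<noteq> z))"
    by (rule bchoice[elim_format]) blast
  have "finite (\<Union>(Pf ` S))" using Pf finS by auto
  moreover have "\<forall>s\<in>S. \<forall>u v. 0 \<le> u \<longrightarrow> u < v \<longrightarrow> v \<le> 1 \<longrightarrow> {u<..<v} \<inter> \<Union>(Pf ` S) = {} \<longrightarrow>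
            (\<forall>z\<in>{u<..<v}. \<phi> s z = z) \<or> (\<forall>z\<in>{u<..<v}. \<phi> s z \<noteq> z)"
  proof (intro ballI allI impI)
    fix s u v assume s: "s \<in> S" and uv: "0 \<le> u" "u < v" "v \<le> 1" "{u<..<v} \<inter> \<Union>(Pf ` S) = {}"
    have "{u<..<v} \<inter> Pf s = {}" using uv(4) s by blast
    thus "(\<forall>z\<in>{u<..<v}. \<phi> s z = z) \<or> (\<forall>z\<in>{u<..<v}. \<phi> s z \<noteq> z)" using Pf s uv by blast
  qed
  ultimately show ?thesis by blast
qed

lemma exQ: "\<exists>Q. finite Q \<and> 0 \<in> Q \<and> 1 \<in> Q \<and> (\<forall>p\<in>Q. 0 \<le> p \<and> p \<le> 1 \<and> p \<in> Fix) \<and>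
   (\<forall>a b. a \<in> Q \<longrightarrow> b \<in> Q \<longrightarrow> a < b \<longrightarrow> (\<forall>p\<in>Q. \<not>(a < p \<and> p < b)) \<longrightarrow>
       (\<forall>y\<in>{a<..<b}. y \<in> Fix) \<or> (\<forall>y\<in>{a<..<b}. y \<notin> Fix))"
proof -
  obtain P0 where P0: "finite P0" "\<forall>s\<in>S. \<forall>u v. 0 \<le> u \<longrightarrow> u < v \<longrightarrow> v \<le> 1 \<longrightarrow> {u<..<v} \<inter> P0 = {} \<longrightarrow>
            (\<forall>z\<in>{u<..<v}. \<phi> s z = z) \<or> (\<forall>z\<in>{u<..<v}. \<phi> s z \<noteq> z)" using exP by blast
  define P where "P = P0 \<union> {0,1}"
  define Q where "Q = {p\<in>P. 0 \<le> p \<and> p \<le> 1 \<and> p \<in> Fix}"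
  have finP: "finite P" using P0 unfolding P_def by auto
  have finQ: "finite Q" using finP unfolding Q_def by auto
  have Q01: "0 \<in> Q" "1 \<in> Q" unfolding Q_def P_def using fix01 by auto
  have dich: "(\<forall>y\<in>{a<..<b}. y \<in> Fix) \<or> (\<forall>y\<in>{a<..<b}. y \<notin> Fix)"
    if ab: "a \<in> Q" "b \<in> Q" "a < b" and gap: "\<forall>p\<in>Q. \<not>(a < p \<and> p < b)" for a b
  proof (cases "\<exists>x\<in>{a<..<b}. x \<in> Fix")
    case False thus ?thesis by blast
  next
    case True
    then obtain x where x: "a < x" "x < b" "x \<in> Fix" by auto
    have a01: "0 \<le> a" "b \<le> 1" "a \<in> Fix" "b \<in> Fix" using ab unfolding Q_def by auto
    define L where "L = {r\<in>P. a \<le> r \<and> r < x} \<union> {a}"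
    define R where "R = {r\<in>P. x < r \<and> r \<le> b} \<union> {b}"
    have finL: "finite L" "L \<noteq> {}" using finP unfolding L_def by auto
    have finR: "finite R" "R \<noteq> {}" using finP unfolding R_def by auto
    define p where "p = Max L"
    define p' where "p' = Min R"
    have pL: "p \<in> L" unfolding p_def using finL by simp
    have pR: "p' \<in> R" unfolding p'_def using finR by simp
    have pge: "a \<le> p" unfolding p_def using finL by (simp add: L_def)
    have ple: "p' \<le> b" unfolding p'_def using finR by (simp add: R_def)
    have px: "p < x" using pL x unfolding L_def by auto
    have xp': "x < p'" using pR x unfolding R_def by auto
    have xnP: "x \<notin> P"
    proof
      assume "x \<in> P" hence "x \<in> Q" using x a01 unfolding Q_def by auto
      thus False using gap x by auto
    qed
    have empt: "{p<..<p'} \<inter> P = {}"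
    proof (rule ccontr)
      assume "{p<..<p'} \<inter> P \<noteq> {}"
      then obtain r where r: "r \<in> P" "p < r" "r < p'" by auto
      show False
      proof (cases "r < x")
        case True hence "r \<in> L" using r pge unfolding L_def by auto
        hence "r \<le> p" unfolding p_def using finL by simp
        thus False using r by auto
      next
        case False hence "x < r" using xnP r by (cases "x = r") auto
        hence "r \<in> R" using r ple unfolding R_def by auto
        hence "p' \<le> r" unfolding p'_def using finR by simp
        thus False using r by auto
      qed
    qed
    have idS: "\<forall>s\<in>S. \<forall>z\<in>{p<..<p'}. \<phi> s z = z"
    proof
      fix s assume s: "s \<in> S"
      have "{p<..<p'} \<inter> P0 = {}" using empt unfolding P_def by auto
      hence "(\<forall>z\<in>{p<..<p'}. \<phi> s z = z) \<or> (\<forall>z\<in>{p<..<p'}. \<phi> s z \<noteq> z)"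
        using P0(2) s pge a01 px xp' ple by auto
      moreover have "\<phi> s x = x" using x(3) s SG unfolding Fix_def by auto
      ultimately show "\<forall>z\<in>{p<..<p'}. \<phi> s z = z" using px xp' by auto
    qed
    have idG: "\<forall>g\<in>carrier G. \<forall>z\<in>{p<..<p'}. \<phi> g z = z" using gen_fix[OF idS] by blast
    have pp: "0 \<le> p" "p < p'" "p' \<le> 1" using pge a01 px xp' ple by auto
    have pFix: "p \<in> Fix" unfolding Fix_def
    proof (safe)
      fix g assume g: "g \<in> carrier G"
      have 1: "\<phi> g p \<le> p" using pl_below[OF ppl[OF g] pp] idG g by blast
      have 2: "\<phi> (inv g) p \<le> p" using pl_below[OF ppl[of "inv g"] pp] idG g by simp
      have "\<phi> g (\<phi> (inv g) p) \<le> \<phi> g p" using pl_mono[OF ppl[OF g] 2] pp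
          pl_range[OF ppl[of "inv g"], of p] g by auto
      thus "\<phi> g p = p" using 1 phi_inv2[OF g] by simp
    qed
    have p'Fix: "p' \<in> Fix" unfolding Fix_def
    proof (safe)
      fix g assume g: "g \<in> carrier G"
      have 1: "\<phi> g p' \<ge> p'" using pl_above[OF ppl[OF g] pp] idG g by blast
      have 2: "\<phi> (inv g) p' \<ge> p'" using pl_above[OF ppl[of "inv g"] pp] idG g by simp
      have "\<phi> g p' \<le> \<phi> g (\<phi> (inv g) p')" using pl_mono[OF ppl[OF g] 2] pp
          pl_range[OF ppl[of "inv g"], of p'] g by auto
      thus "\<phi> g p' = p'" using 1 phi_inv2[OF g] by simp
    qed
    have "p = a"
    proof (rule ccontr)
      assume "p \<noteq> a"
      hence "p \<in> P" using pL unfolding L_def by auto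
      hence "p \<in> Q" using pFix pp unfolding Q_def by auto
      thus False using gap pge \<open>p \<noteq> a\<close> px x by auto
    qed
    moreover have "p' = b"
    proof (rule ccontr)
      assume "p' \<noteq> b"
      hence "p' \<in> P" using pR unfolding R_def by auto
      hence "p' \<in> Q" using p'Fix pp unfolding Q_def by auto
      thus False using gap ple \<open>p' \<noteq> b\<close> xp' x by auto
    qed
    ultimately have "\<forall>y\<in>{a<..<b}. y \<in> Fix" using idG unfolding Fix_def by auto
    thus ?thesis by blast
  qed
  show ?thesis using finQ Q01 dich unfolding Q_def by (intro exI[of _ Q]) (auto simp: Q_def)
qed

end

lemma (in group) cm_inv:
  assumes p: "p \<in> carrier G" and t: "t \<in> carrier G" and e: "p \<otimes> t = t \<otimes> p"
  shows "p \<otimes> inv t = inv t \<otimes> p"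
proof -
  have "t \<otimes> (p \<otimes> inv t) = (t \<otimes> p) \<otimes> inv t" using p t by (simp add: m_assoc)
  also have "\<dots> = (p \<otimes> t) \<otimes> inv t" using e by simp
  also have "\<dots> = p" using p t by (simp add: m_assoc)
  finally have "t \<otimes> (p \<otimes> inv t) = p" .
  thus ?thesis using inv_solve_left[of "p \<otimes> inv t" t p] p t by simp
qed

lemma (in group) cm_mult:
  assumes p: "p \<in> carrier G" and q: "q1 \<in> carrier G" "q2 \<in> carrier G"
    and e: "p \<otimes> q1 = q1 \<otimes> p" "p \<otimes> q2 = q2 \<otimes> p"
  shows "p \<otimes> (q1 \<otimes> q2) = (q1 \<otimes> q2) \<otimes> p"
proof -
  have "p \<otimes> (q1 \<otimes> q2) = (p \<otimes> q1) \<otimes> q2" using q p by (simp add: m_assoc)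
  also have "\<dots> = q1 \<otimes> (p \<otimes> q2)" using e q p by (simp add: m_assoc)
  also have "\<dots> = (q1 \<otimes> q2) \<otimes> p" using e q p by (simp add: m_assoc)
  finally show ?thesis .
qed

lemma (in group) conj_comm_generate:
  assumes x: "x \<in> carrier G" and SA: "SA \<subseteq> carrier G" and SB: "SB \<subseteq> carrier G"
    and gen: "\<forall>a\<in>SA. \<forall>b\<in>SB. (x \<otimes> a \<otimes> inv x) \<otimes> b = b \<otimes> (x \<otimes> a \<otimes> inv x)"
  shows "\<forall>a\<in>generate G SA. \<forall>b\<in>generate G SB. (x \<otimes> a \<otimes> inv x) \<otimes> b = b \<otimes> (x \<otimes> a \<otimes> inv x)"
proof -
  have cm_gen: "\<forall>q\<in>generate G T. p \<otimes> q = q \<otimes> p"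
    if p: "p \<in> carrier G" and T: "T \<subseteq> carrier G" and h: "\<forall>t\<in>T. p \<otimes> t = t \<otimes> p" for p T
  proof
    fix q assume "q \<in> generate G T"
    thus "p \<otimes> q = q \<otimes> p"
    proof (induction rule: generate.induct)
      case one thus ?case using p by simp
    next
      case (incl h) thus ?case using h by blast
    next
      case (inv t)
      have t: "t \<in> carrier G" using inv T by blast
      have "p \<otimes> t = t \<otimes> p" using h inv by blast
      thus ?case using t p cm_inv by blast
    next
      case (eng q1 q2)
      have q: "q1 \<in> carrier G" "q2 \<in> carrier G" using eng generate_incl[OF T] by auto
      show ?case using cm_mult[OF p q] eng by blast
    qed
  qed
  define c where "c a = x \<otimes> a \<otimes> inv x" for a
  have step1: "\<forall>a\<in>generate G SA. c a \<otimes> b = b \<otimes> c a" if b: "b \<in> SB" for b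
  proof
    fix a assume "a \<in> generate G SA"
    thus "c a \<otimes> b = b \<otimes> c a"
    proof (induction rule: generate.induct)
      case one thus ?case using x b SB unfolding c_def by auto
    next
      case (incl h) thus ?case using gen b unfolding c_def by blast
    next
      case (inv t)
      have t: "t \<in> carrier G" using inv SA by blast
      have bc: "b \<in> carrier G" using b SB by blast
      have e: "c t \<otimes> b = b \<otimes> c t" using gen inv b unfolding c_def by blast
      have ct: "c t \<in> carrier G" using t x unfolding c_def by simp
      have "c (inv t) = inv (c t)" using t x unfolding c_def by (simp add: inv_mult_group m_assoc)
      have "b \<otimes> inv (c t) = inv (c t) \<otimes> b" using cm_inv[OF bc ct] e by simp
      thus ?case using \<open>c (inv t) = inv (c t)\<close> by simp
    next
      case (eng q1 q2)
      have q: "q1 \<in> carrier G" "q2 \<in> carrier G" using eng generate_incl[OF SA] by auto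
      have bc: "b \<in> carrier G" using b SB by blast
      have cc: "c q1 \<in> carrier G" "c q2 \<in> carrier G" using q x unfolding c_def by auto
      have ix: "inv x \<otimes> (x \<otimes> z) = z" if "z \<in> carrier G" for z using that x by (simp add: m_assoc[symmetric])
      have "c (q1 \<otimes> q2) = c q1 \<otimes> c q2" using q x ix unfolding c_def by (simp add: m_assoc)
      moreover have "b \<otimes> (c q1 \<otimes> c q2) = (c q1 \<otimes> c q2) \<otimes> b"
        using cm_mult[OF bc cc] eng by simp
      ultimately show ?case by simp
    qed
  qed
  show ?thesis
  proof (intro ballI)
    fix a b assume a: "a \<in> generate G SA" and b: "b \<in> generate G SB"
    have ac: "c a \<in> carrier G" using a generate_incl[OF SA] x unfolding c_def by auto
    have "\<forall>q\<in>generate G SB. c a \<otimes> q = q \<otimes> c a"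
      using cm_gen[OF ac SB] step1 a by blast
    thus "(x \<otimes> a \<otimes> inv x) \<otimes> b = b \<otimes> (x \<otimes> a \<otimes> inv x)" using b unfolding c_def by blast
  qed
qed

context plrep begin

lemma pointwise:
  assumes hxy: "h \<in> carrier G" "x \<in> carrier G" "y \<in> carrier G"
    and b: "b \<in> Fix" "b \<le> 1" and cd: "0 \<le> c" "c \<le> b" "0 \<le> d" "d \<le> b" "d \<le> \<phi> h c"
    and fx: "\<forall>z\<in>{0..c}. \<phi> x z = z" and fy: "\<forall>z\<in>{d..b}. \<phi> y z = z"
  shows "\<forall>z\<in>{0..b}. \<phi> ((h \<otimes> x \<otimes> inv h) \<otimes> y \<otimes> inv (h \<otimes> x \<otimes> inv h) \<otimes> inv y) z = z"
proof
  define u where "u = h \<otimes> x \<otimes> inv h"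
  have u: "u \<in> carrier G" using hxy unfolding u_def by simp
  have fu: "\<phi> u z = \<phi> h (\<phi> x (\<phi> (inv h) z))" for z using hxy unfolding u_def by (simp add: phi_mult)
  have b0: "0 \<le> b" using cd by simp
  have hc: "\<phi> h c \<in> {0..1}" using pl_range[OF ppl[OF hxy(1)], of c] cd b by auto
  have i: "\<phi> u z = z" if z: "0 \<le> z" "z \<le> d" for z
  proof -
    have "\<phi> (inv h) z \<le> \<phi> (inv h) (\<phi> h c)" using pl_mono[OF ppl[of "inv h"], of z "\<phi> h c"] hxy z cd hc b by auto
    hence "\<phi> (inv h) z \<le> c" using phi_inv1[OF hxy(1)] by simp
    moreover have "0 \<le> \<phi> (inv h) z" using pl_range[OF ppl[of "inv h"], of z] hxy z cd b by auto
    ultimately have "\<phi> x (\<phi> (inv h) z) = \<phi> (inv h) z" using fx by auto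
    thus ?thesis using fu phi_inv2[OF hxy(1)] by simp
  qed
  have ub: "\<phi> u b = b" using b u unfolding Fix_def by auto
  have ii: "d \<le> \<phi> u z \<and> \<phi> u z \<le> b" if z: "d \<le> z" "z \<le> b" for z
    using pl_mono[OF ppl[OF u], of d z] pl_mono[OF ppl[OF u], of z b] i[of d] ub z cd b by auto
  have yd: "\<phi> y d = d" using fy cd by auto
  have iii: "0 \<le> \<phi> y z \<and> \<phi> y z \<le> d" if z: "0 \<le> z" "z \<le> d" for z
    using pl_mono[OF ppl[OF hxy(3)], of z d] pl_range[OF ppl[OF hxy(3)], of z] yd z cd b by auto
  have iv: "\<phi> u (\<phi> y z) = \<phi> y (\<phi> u z)" if z: "0 \<le> z" "z \<le> b" for z
  proof (cases "z \<le> d")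
    case True thus ?thesis using i iii z by auto
  next
    case False thus ?thesis using fy ii z by auto
  qed
  fix z assume z: "z \<in> {0..b}"
  define w where "w = \<phi> (inv u) (\<phi> (inv y) z)"
  have w1: "0 \<le> \<phi> (inv y) z \<and> \<phi> (inv y) z \<le> b" using pres_below[of "inv y" b z] hxy b z by auto
  have w: "0 \<le> w \<and> w \<le> b" unfolding w_def using pres_below[of "inv u" b] u b w1 by auto
  have "\<phi> (u \<otimes> y \<otimes> inv u \<otimes> inv y) z = \<phi> u (\<phi> y w)" using u hxy unfolding w_def by (simp add: phi_mult)
  also have "\<dots> = \<phi> y (\<phi> u w)" using iv w by auto
  also have "\<phi> u w = \<phi> (inv y) z" unfolding w_def using phi_inv2[OF u] by simp
  finally show "\<phi> ((h \<otimes> x \<otimes> inv h) \<otimes> y \<otimes> inv (h \<otimes> x \<otimes> inv h) \<otimes> inv y) z = z"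
    using phi_inv2[OF hxy(3)] unfolding u_def by simp
qed

end

context plrep begin

lemma step:
  assumes ab: "a \<in> Fix" "b \<in> Fix" "0 \<le> a" "a < b" "b \<le> 1"
   and dich: "(\<forall>y\<in>{a<..<b}. y \<in> Fix) \<or> (\<forall>y\<in>{a<..<b}. y \<notin> Fix)"
   and N: "N = derived G (carrier G) \<inter> {g\<in>carrier G. \<forall>y\<in>{0..b}. \<phi> g y = y}"
   and M: "M = derived G (carrier G) \<inter> {g\<in>carrier G. \<forall>y\<in>{0..a}. \<phi> g y = y}"
   and nN: "N \<lhd> G"
   and A: "fin_gen_subgroup A (G Mod N)" and B: "fin_gen_subgroup B (G Mod N)"
   and AM: "A \<subseteq> (\<lambda>x. N #> x) ` M" and BM: "B \<subseteq> (\<lambda>x. N #> x) ` M"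
  shows "\<exists>g \<in> carrier (G Mod N). \<forall>x\<in>A. \<forall>y\<in>B.
                 (g \<otimes>\<^bsub>G Mod N\<^esub> x \<otimes>\<^bsub>G Mod N\<^esub> inv\<^bsub>G Mod N\<^esub> g) \<otimes>\<^bsub>G Mod N\<^esub> y =
                 y \<otimes>\<^bsub>G Mod N\<^esub> (g \<otimes>\<^bsub>G Mod N\<^esub> x \<otimes>\<^bsub>G Mod N\<^esub> inv\<^bsub>G Mod N\<^esub> g)"
proof -
  interpret Nn: normal N G by (rule nN)
  interpret Q: group "G Mod N" by (rule Nn.factorgroup_is_group)
  obtain SA where SA: "finite SA" "SA \<subseteq> carrier (G Mod N)" "A = generate (G Mod N) SA"
    using A unfolding fin_gen_subgroup_def by blast
  obtain SB where SB: "finite SB" "SB \<subseteq> carrier (G Mod N)" "B = generate (G Mod N) SB"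
    using B unfolding fin_gen_subgroup_def by blast
  have "SA \<subseteq> A" unfolding SA(3) by (rule subsetI, rule generate.incl)
  have "\<forall>s\<in>SA. \<exists>x. x \<in> M \<and> s = N #> x"
  proof
    fix s assume "s \<in> SA" hence "s \<in> A" using \<open>SA \<subseteq> A\<close> by blast
    hence "s \<in> (\<lambda>x. N #> x) ` M" using AM by (rule subsetD[rotated])
    thus "\<exists>x. x \<in> M \<and> s = N #> x" by (rule imageE) blast
  qed
  then obtain ra where ra: "\<forall>s\<in>SA. ra s \<in> M \<and> s = N #> ra s" by (rule bchoice[elim_format]) blast
  have "SB \<subseteq> B" unfolding SB(3) by (rule subsetI, rule generate.incl)
  have "\<forall>s\<in>SB. \<exists>x. x \<in> M \<and> s = N #> x"
  proof
    fix s assume "s \<in> SB" hence "s \<in> B" using \<open>SB \<subseteq> B\<close> by blast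
    hence "s \<in> (\<lambda>x. N #> x) ` M" using BM by (rule subsetD[rotated])
    thus "\<exists>x. x \<in> M \<and> s = N #> x" by (rule imageE) blast
  qed
  then obtain rb where rb: "\<forall>s\<in>SB. rb s \<in> M \<and> s = N #> rb s" by (rule bchoice[elim_format]) blast
  define R where "R = ra ` SA \<union> rb ` SB"
  have finR: "finite R" unfolding R_def using SA SB by auto
  have RM: "R \<subseteq> M" unfolding R_def using ra rb by auto
  have Mc: "M \<subseteq> carrier G" "M \<subseteq> derived G (carrier G)" unfolding M by auto
  have "\<exists>c d h. h \<in> carrier G \<and> 0 \<le> c \<and> c \<le> b \<and> 0 \<le> d \<and> d \<le> b \<and> d \<le> \<phi> h c \<and>
           (\<forall>x\<in>R. (\<forall>z\<in>{0..c}. \<phi> x z = z) \<and> (\<forall>z\<in>{d..b}. \<phi> x z = z))"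
  proof (cases "\<forall>y\<in>{a<..<b}. y \<in> Fix")
    case True
    have "\<forall>x\<in>R. \<forall>z\<in>{0..b}. \<phi> x z = z"
    proof (intro ballI)
      fix x z assume x: "x \<in> R" and z: "z \<in> {0..b}"
      have xc: "x \<in> carrier G" "\<forall>y\<in>{0..a}. \<phi> x y = y" using x RM unfolding M by auto
      show "\<phi> x z = z"
      proof (cases "z \<le> a")
        case True thus ?thesis using xc z by auto
      next
        case False
        show ?thesis
        proof (cases "z = b")
          case True thus ?thesis using ab xc unfolding Fix_def by auto
        next
          case False
          hence "z \<in> Fix" using \<open>\<not> z \<le> a\<close> z \<open>\<forall>y\<in>{a<..<b}. y \<in> Fix\<close> by auto
          thus ?thesis using xc unfolding Fix_def by auto
        qed
      qed
    qed
    thus ?thesis using ab phi_one by (intro exI[of _ b] exI[of _ b] exI[of _ \<one>]) auto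
  next
    case False
    hence orb: "\<forall>y\<in>{a<..<b}. y \<notin> Fix" using dich by blast
    have a1: "a < 1" "0 < b" using ab by auto
    have "\<forall>x\<in>R. \<exists>e. e > 0 \<and> (\<forall>z\<in>{a..a+e}. \<phi> x z = z)"
    proof
      fix x assume "x \<in> R" hence "x \<in> derived G (carrier G)" using Mc RM by blast
      thus "\<exists>e. e > 0 \<and> (\<forall>z\<in>{a..a+e}. \<phi> x z = z)" using derived_right[OF ab(1,3) a1(1)] by blast
    qed
    then obtain er where er: "\<forall>x\<in>R. er x > 0 \<and> (\<forall>z\<in>{a..a+er x}. \<phi> x z = z)" by (rule bchoice[elim_format]) blast
    have "\<forall>x\<in>R. \<exists>e. e > 0 \<and> (\<forall>z\<in>{b-e..b}. \<phi> x z = z)"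
    proof
      fix x assume "x \<in> R" hence "x \<in> derived G (carrier G)" using Mc RM by blast
      thus "\<exists>e. e > 0 \<and> (\<forall>z\<in>{b-e..b}. \<phi> x z = z)" using derived_left[OF ab(2) a1(2) ab(5)] by blast
    qed
    then obtain el where el: "\<forall>x\<in>R. el x > 0 \<and> (\<forall>z\<in>{b-el x..b}. \<phi> x z = z)" by (rule bchoice[elim_format]) blast
    define E where "E = insert ((b-a)/3) ((\<lambda>x. min (er x) (el x)) ` R)"
    define \<epsilon> where "\<epsilon> = Min E"
    have finE: "finite E" "E \<noteq> {}" unfolding E_def using finR by auto
    have epos: "\<epsilon> > 0" unfolding \<epsilon>_def using finE er el ab unfolding E_def
      by (subst Min_gr_iff) auto
    have eba: "\<epsilon> \<le> (b-a)/3" unfolding \<epsilon>_def using finE unfolding E_def by (intro Min_le) auto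
    have eer0: "\<epsilon> \<le> min (er x) (el x)" if "x \<in> R" for x
      unfolding \<epsilon>_def using finE that unfolding E_def by (intro Min_le) auto
    have eer: "\<epsilon> \<le> er x" "\<epsilon> \<le> el x" if "x \<in> R" for x using eer0[OF that] by auto
    define c where "c = a + \<epsilon>"
    define d where "d = b - \<epsilon>"
    have cd: "a < c" "c < b" "d < b" "0 \<le> c" "0 \<le> d" using epos eba ab unfolding c_def d_def by auto
    obtain h where h: "h \<in> carrier G" "d \<le> \<phi> h c" using orbit_push[OF ab(4,3,5) orb cd(1,2,3)] by blast
    have "\<forall>x\<in>R. (\<forall>z\<in>{0..c}. \<phi> x z = z) \<and> (\<forall>z\<in>{d..b}. \<phi> x z = z)"
    proof (rule ballI)
      fix x assume x: "x \<in> R"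
      have xc: "\<forall>y\<in>{0..a}. \<phi> x y = y" using x RM unfolding M by auto
      have "\<forall>z\<in>{0..c}. \<phi> x z = z"
      proof
        fix z assume z: "z \<in> {0..c}"
        show "\<phi> x z = z"
        proof (cases "z \<le> a")
          case True thus ?thesis using xc z by auto
        next
          case False thus ?thesis using er x eer[OF x] z unfolding c_def by auto
        qed
      qed
      moreover have "\<forall>z\<in>{d..b}. \<phi> x z = z" using el x eer[OF x] unfolding d_def by auto
      ultimately show "(\<forall>z\<in>{0..c}. \<phi> x z = z) \<and> (\<forall>z\<in>{d..b}. \<phi> x z = z)" by blast
    qed
    thus ?thesis using h cd by (intro exI[of _ c] exI[of _ d] exI[of _ h]) auto
  qed
  then obtain c d h where cdh: "h \<in> carrier G" "0 \<le> c" "c \<le> b" "0 \<le> d" "d \<le> b" "d \<le> \<phi> h c"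
    "\<forall>x\<in>R. (\<forall>z\<in>{0..c}. \<phi> x z = z) \<and> (\<forall>z\<in>{d..b}. \<phi> x z = z)" by blast
  define g where "g = N #> h"
  have gc: "g \<in> carrier (G Mod N)" unfolding g_def using cdh(1) by (simp add: carrier_FactGroup)
  have ginv: "inv\<^bsub>G Mod N\<^esub> g = N #> inv h" using Nn.inv_FactGroup[OF gc] Nn.rcos_inv cdh(1) unfolding g_def by simp
  have gen: "\<forall>s\<in>SA. \<forall>t\<in>SB. (g \<otimes>\<^bsub>G Mod N\<^esub> s \<otimes>\<^bsub>G Mod N\<^esub> inv\<^bsub>G Mod N\<^esub> g) \<otimes>\<^bsub>G Mod N\<^esub> t =
                 t \<otimes>\<^bsub>G Mod N\<^esub> (g \<otimes>\<^bsub>G Mod N\<^esub> s \<otimes>\<^bsub>G Mod N\<^esub> inv\<^bsub>G Mod N\<^esub> g)"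
  proof (intro ballI)
    fix s t assume s: "s \<in> SA" and t: "t \<in> SB"
    define x where "x = ra s"
    define y where "y = rb t"
    have xR: "x \<in> R" "y \<in> R" unfolding x_def y_def R_def using s t by auto
    have xy: "x \<in> carrier G" "y \<in> carrier G" using xR RM Mc by auto
    have sx: "s = N #> x" "t = N #> y" using ra rb s t unfolding x_def y_def by auto
    define u where "u = h \<otimes> x \<otimes> inv h"
    have u: "u \<in> carrier G" unfolding u_def using xy cdh(1) by simp
    have lhs: "g \<otimes>\<^bsub>G Mod N\<^esub> s \<otimes>\<^bsub>G Mod N\<^esub> inv\<^bsub>G Mod N\<^esub> g = N #> u"
      unfolding u_def ginv sx using cdh(1) xy by (simp add: g_def Nn.rcos_sum)
    have k: "u \<otimes> y \<otimes> inv u \<otimes> inv y \<in> N"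
    proof -
      have "u \<otimes> y \<otimes> inv u \<otimes> inv y \<in> derived_set G (carrier G)" using u xy by blast
      hence "u \<otimes> y \<otimes> inv u \<otimes> inv y \<in> derived G (carrier G)" unfolding derived_def by (rule generate.incl)
      moreover have "\<forall>z\<in>{0..b}. \<phi> (u \<otimes> y \<otimes> inv u \<otimes> inv y) z = z"
        using pointwise[OF cdh(1) xy ab(2,5) cdh(2-6)] cdh(7) xR unfolding u_def by blast
      ultimately show ?thesis unfolding N using u xy by auto
    qed
    have "(u \<otimes> y) \<otimes> inv (y \<otimes> u) = u \<otimes> y \<otimes> inv u \<otimes> inv y" using u xy by (simp add: inv_mult_group m_assoc)
    hence "(u \<otimes> y) \<otimes> inv (y \<otimes> u) \<in> N" using k by simp
    hence "u \<otimes> y \<in> N #> (y \<otimes> u)" using Nn.rcos_module_rev[OF is_group] u xy by simp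
    hence eq: "N #> (y \<otimes> u) = N #> (u \<otimes> y)" using repr_independence[of "u \<otimes> y" N "y \<otimes> u"] u xy Nn.subgroup_axioms by simp
    show "(g \<otimes>\<^bsub>G Mod N\<^esub> s \<otimes>\<^bsub>G Mod N\<^esub> inv\<^bsub>G Mod N\<^esub> g) \<otimes>\<^bsub>G Mod N\<^esub> t =
                 t \<otimes>\<^bsub>G Mod N\<^esub> (g \<otimes>\<^bsub>G Mod N\<^esub> s \<otimes>\<^bsub>G Mod N\<^esub> inv\<^bsub>G Mod N\<^esub> g)"
      unfolding lhs using sx u xy eq by (simp add: Nn.rcos_sum)
  qed
  show ?thesis using Q.conj_comm_generate[OF gc SA(2) SB(2) gen] SA(3) SB(3) gc by blast
qed

end

context plrep begin
lemma fixer_normal: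
  assumes b: "b \<in> Fix" "0 \<le> b" "b \<le> 1"
  shows "{g\<in>carrier G. \<forall>y\<in>{0..b}. \<phi> g y = y} \<lhd> G"
proof -
  have "\<forall>x\<in>carrier G. \<forall>h\<in>{g\<in>carrier G. \<forall>y\<in>{0..b}. \<phi> g y = y}.
          x \<otimes> h \<otimes> inv x \<in> {g\<in>carrier G. \<forall>y\<in>{0..b}. \<phi> g y = y}"
  proof (intro ballI)
    fix x h assume x: "x \<in> carrier G" and h: "h \<in> {g\<in>carrier G. \<forall>y\<in>{0..b}. \<phi> g y = y}"
    have hc: "h \<in> carrier G" "\<forall>y\<in>{0..b}. \<phi> h y = y" using h by auto
    have "\<forall>y\<in>{0..b}. \<phi> (x \<otimes> h \<otimes> inv x) y = y"
    proof
      fix y assume y: "y \<in> {0..b}"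
      have "\<phi> (inv x) y \<in> {0..b}" using pres_below[of "inv x" b y] x b y by auto
      hence "\<phi> h (\<phi> (inv x) y) = \<phi> (inv x) y" using hc by auto
      thus "\<phi> (x \<otimes> h \<otimes> inv x) y = y" using x hc phi_inv2[OF x] by (simp add: phi_mult)
    qed
    thus "x \<otimes> h \<otimes> inv x \<in> {g\<in>carrier G. \<forall>y\<in>{0..b}. \<phi> g y = y}" using x hc by auto
  qed
  thus ?thesis using normal_inv_iff fixer_subgroup[of "{0..b}"] by blast
qed
end

context plrep_fg begin

lemma main:
  shows "\<exists>(n::nat) (Gs :: nat \<Rightarrow> 'a set).
           Gs 0 = derived G (carrier G) \<and> Gs n = {\<one>\<^bsub>G\<^esub>} \<and>
           (\<forall>i\<le>n. Gs i \<lhd> G) \<and>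
           (\<forall>i<n. Gs (Suc i) \<subseteq> Gs i) \<and>
           (\<forall>i\<in>{1..n}. \<forall>A B.
              fin_gen_subgroup A (G Mod Gs i) \<and> fin_gen_subgroup B (G Mod Gs i) \<and>
              A \<subseteq> (\<lambda>x. Gs i #>\<^bsub>G\<^esub> x) ` Gs (i - 1) \<and>
              B \<subseteq> (\<lambda>x. Gs i #>\<^bsub>G\<^esub> x) ` Gs (i - 1) \<longrightarrow>
              (\<exists>g \<in> carrier (G Mod Gs i). \<forall>a\<in>A. \<forall>b\<in>B.
                 (g \<otimes>\<^bsub>G Mod Gs i\<^esub> a \<otimes>\<^bsub>G Mod Gs i\<^esub> inv\<^bsub>G Mod Gs i\<^esub> g) \<otimes>\<^bsub>G Mod Gs i\<^esub> b =
                 b \<otimes>\<^bsub>G Mod Gs i\<^esub> (g \<otimes>\<^bsub>G Mod Gs i\<^esub> a \<otimes>\<^bsub>G Mod Gs i\<^esub> inv\<^bsub>G Mod Gs i\<^esub> g)))"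
proof -
  obtain Q where Q: "finite Q" "0 \<in> Q" "1 \<in> Q" "\<forall>p\<in>Q. 0 \<le> p \<and> p \<le> 1 \<and> p \<in> Fix"
    "\<forall>a b. a \<in> Q \<longrightarrow> b \<in> Q \<longrightarrow> a < b \<longrightarrow> (\<forall>p\<in>Q. \<not>(a < p \<and> p < b)) \<longrightarrow>
       (\<forall>y\<in>{a<..<b}. y \<in> Fix) \<or> (\<forall>y\<in>{a<..<b}. y \<notin> Fix)" using exQ by blast
  have Q4: "\<forall>p\<in>Q. 0 \<le> p \<and> p \<le> 1" using Q(4) by blast
  obtain n q where nq: "q 0 = 0" "q n = 1" "\<forall>i\<le>n. q i \<in> Q" "\<forall>i j. i < j \<longrightarrow> j \<le> n \<longrightarrow> q i < q j"
     "\<forall>i<n. \<forall>p\<in>Q. \<not>(q i < p \<and> p < q (Suc i))"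
    using finite_chain[OF Q(1-3) Q4] by blast
  have qi: "q i \<in> Fix" "0 \<le> q i" "q i \<le> 1" if "i \<le> n" for i using nq(3) Q(4) that by auto
  define Gs where "Gs i = derived G (carrier G) \<inter> {g\<in>carrier G. \<forall>y\<in>{0..q i}. \<phi> g y = y}" for i
  have Dc: "derived G (carrier G) \<subseteq> carrier G" by (rule derived_in_carrier) simp
  have G0: "Gs 0 = derived G (carrier G)"
    unfolding Gs_def nq(1) using Dc pl_0[OF ppl] by auto
  have Gn: "Gs n = {\<one>}"
  proof
    show "Gs n \<subseteq> {\<one>}"
    proof
      fix g assume g: "g \<in> Gs n"
      hence gc: "g \<in> carrier G" "\<forall>y\<in>{0..1}. \<phi> g y = y" unfolding Gs_def nq(2) by auto
      have "\<phi> g = \<phi> \<one>"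
      proof
        fix y show "\<phi> g y = \<phi> \<one> y"
          using gc pl_out[OF ppl[OF gc(1)], of y] phi_one by (cases "y \<in> {0..1}") auto
      qed
      hence "g = \<one>" using inj_onD[OF pinj] gc by auto
      thus "g \<in> {\<one>}" by simp
    qed
  next
    have "\<one> \<in> derived G (carrier G)" using subgroup.one_closed[OF derived_is_subgroup[of "carrier G"]] by simp
    thus "{\<one>} \<subseteq> Gs n" unfolding Gs_def using phi_one by auto
  qed
  have Gnormal: "\<forall>i\<le>n. Gs i \<lhd> G"
  proof (intro allI impI)
    fix i assume "i \<le> n"
    thus "Gs i \<lhd> G" unfolding Gs_def
      by (intro normal_subgroup_intersect[OF derived_self_is_normal fixer_normal] qi)
  qed
  have Gdec: "\<forall>i<n. Gs (Suc i) \<subseteq> Gs i"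
  proof (intro allI impI)
    fix i assume i: "i < n"
    have "q i < q (Suc i)" using nq(4) i by auto
    thus "Gs (Suc i) \<subseteq> Gs i" unfolding Gs_def by auto
  qed
  have Gstep: "\<forall>i\<in>{1..n}. \<forall>A B.
              fin_gen_subgroup A (G Mod Gs i) \<and> fin_gen_subgroup B (G Mod Gs i) \<and>
              A \<subseteq> (\<lambda>x. Gs i #>\<^bsub>G\<^esub> x) ` Gs (i - 1) \<and>
              B \<subseteq> (\<lambda>x. Gs i #>\<^bsub>G\<^esub> x) ` Gs (i - 1) \<longrightarrow>
              (\<exists>g \<in> carrier (G Mod Gs i). \<forall>a\<in>A. \<forall>b\<in>B.
                 (g \<otimes>\<^bsub>G Mod Gs i\<^esub> a \<otimes>\<^bsub>G Mod Gs i\<^esub> inv\<^bsub>G Mod Gs i\<^esub> g) \<otimes>\<^bsub>G Mod Gs i\<^esub> b =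
                 b \<otimes>\<^bsub>G Mod Gs i\<^esub> (g \<otimes>\<^bsub>G Mod Gs i\<^esub> a \<otimes>\<^bsub>G Mod Gs i\<^esub> inv\<^bsub>G Mod Gs i\<^esub> g))"
  proof (rule ballI, rule allI, rule allI, rule impI)
    fix i A B assume i: "i \<in> {1..n}" and AB: "fin_gen_subgroup A (G Mod Gs i) \<and> fin_gen_subgroup B (G Mod Gs i) \<and>
              A \<subseteq> (\<lambda>x. Gs i #>\<^bsub>G\<^esub> x) ` Gs (i - 1) \<and>
              B \<subseteq> (\<lambda>x. Gs i #>\<^bsub>G\<^esub> x) ` Gs (i - 1)"
    have ij: "Suc (i - 1) = i" "i - 1 < n" "i \<le> n" "i - 1 \<le> n" using i by auto
    have lt: "q (i - 1) < q i" using nq(4) ij by auto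
    have gap: "\<forall>p\<in>Q. \<not>(q (i - 1) < p \<and> p < q i)" using nq(5) ij by (metis)
    have inQ: "q (i - 1) \<in> Q" "q i \<in> Q" using nq(3) ij by auto
    have dich: "(\<forall>y\<in>{q (i - 1)<..<q i}. y \<in> Fix) \<or> (\<forall>y\<in>{q (i - 1)<..<q i}. y \<notin> Fix)"
      using Q(5)[rule_format, OF inQ lt gap[rule_format]] .
    have nN: "Gs i \<lhd> G" using Gnormal ij by blast
    have AB': "fin_gen_subgroup A (G Mod Gs i)" "fin_gen_subgroup B (G Mod Gs i)"
      "A \<subseteq> (\<lambda>x. Gs i #>\<^bsub>G\<^esub> x) ` Gs (i - 1)" "B \<subseteq> (\<lambda>x. Gs i #>\<^bsub>G\<^esub> x) ` Gs (i - 1)"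
      using AB by auto
    show "\<exists>g \<in> carrier (G Mod Gs i). \<forall>a\<in>A. \<forall>b\<in>B.
                 (g \<otimes>\<^bsub>G Mod Gs i\<^esub> a \<otimes>\<^bsub>G Mod Gs i\<^esub> inv\<^bsub>G Mod Gs i\<^esub> g) \<otimes>\<^bsub>G Mod Gs i\<^esub> b =
                 b \<otimes>\<^bsub>G Mod Gs i\<^esub> (g \<otimes>\<^bsub>G Mod Gs i\<^esub> a \<otimes>\<^bsub>G Mod Gs i\<^esub> inv\<^bsub>G Mod Gs i\<^esub> g)"
      by (rule step[OF qi(1)[OF ij(4)] qi(1)[OF ij(3)] qi(2)[OF ij(4)] lt qi(3)[OF ij(3)] dich
          Gs_def[of i] Gs_def[of "i - 1"] nN AB'])
  qed
  show ?thesis by (rule exI[of _ n], rule exI[of _ Gs]) (intro conjI G0 Gn Gnormal Gdec Gstep)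
qed

end

theorem lemma4p6:
  fixes G :: "('a, 'b) monoid_scheme"
  assumes "group G" and "PLO G" and "fin_gen_group G"
  shows "\<exists>(n::nat) (Gs :: nat \<Rightarrow> 'a set).
           Gs 0 = derived G (carrier G) \<and> Gs n = {\<one>\<^bsub>G\<^esub>} \<and>
           (\<forall>i\<le>n. Gs i \<lhd> G) \<and>
           (\<forall>i<n. Gs (Suc i) \<subseteq> Gs i) \<and>
           (\<forall>i\<in>{1..n}. \<forall>A B.
              fin_gen_subgroup A (G Mod Gs i) \<and> fin_gen_subgroup B (G Mod Gs i) \<and>
              A \<subseteq> (\<lambda>x. Gs i #>\<^bsub>G\<^esub> x) ` Gs (i - 1) \<and>
              B \<subseteq> (\<lambda>x. Gs i #>\<^bsub>G\<^esub> x) ` Gs (i - 1) \<longrightarrow>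
              (\<exists>g \<in> carrier (G Mod Gs i). \<forall>a\<in>A. \<forall>b\<in>B.
                 (g \<otimes>\<^bsub>G Mod Gs i\<^esub> a \<otimes>\<^bsub>G Mod Gs i\<^esub> inv\<^bsub>G Mod Gs i\<^esub> g) \<otimes>\<^bsub>G Mod Gs i\<^esub> b =
                 b \<otimes>\<^bsub>G Mod Gs i\<^esub> (g \<otimes>\<^bsub>G Mod Gs i\<^esub> a \<otimes>\<^bsub>G Mod Gs i\<^esub> inv\<^bsub>G Mod Gs i\<^esub> g)))"
proof -
  obtain H where H: "subgroup H PLgroup" "G \<cong> (PLgroup\<lparr>carrier := H\<rparr>)"
    using assms(2) unfolding PLO_def by blast
  obtain \<phi> where phi: "\<phi> \<in> iso G (PLgroup\<lparr>carrier := H\<rparr>)" using H(2) unfolding is_iso_def by blast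
  obtain S where S: "finite S" "S \<subseteq> carrier G" "generate G S = carrier G"
    using assms(3) unfolding fin_gen_group_def by blast
  have HP: "H \<subseteq> PL_homeos" using subgroup.subset[OF H(1)] unfolding PLgroup_def by simp
  have hom: "\<phi> \<in> hom G (PLgroup\<lparr>carrier := H\<rparr>)" and bij: "bij_betw \<phi> (carrier G) H"
    using phi unfolding iso_def by auto
  have m: "\<phi> (x \<otimes>\<^bsub>G\<^esub> y) = \<phi> x \<circ> \<phi> y" if "x \<in> carrier G" "y \<in> carrier G" for x y
    using hom that unfolding hom_def PLgroup_def by simp
  have p: "\<phi> x \<in> PL_homeos" if "x \<in> carrier G" for x
    using bij HP that unfolding bij_betw_def by blast
  have ij: "inj_on \<phi> (carrier G)" using bij unfolding bij_betw_def by blast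
  have pr: "plrep G \<phi>" by (rule plrep.intro[OF assms(1)], rule plrep_axioms.intro) (fact m, fact p, fact ij)
  have "plrep_fg G \<phi> S" by (rule plrep_fg.intro[OF pr], rule plrep_fg_axioms.intro) (fact S(1), fact S(2), fact S(3))
  then interpret P: plrep_fg G \<phi> S .
  show ?thesis by (rule P.main)
qed


end
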